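(* Let $\mathfrak g$ be a nilpotent Lie algebra of nilindex $4$ (i.e. $\mathfrak g^4=0$) over a field of characteristic zero, and let $R:\mathfrak g\to\mathfrak g$ be a Rota–Baxter operator of weight 1 with $R(\mathfrak g^i)\subset\mathfrak g^i$ for $i=2,3$. Then the map $$\mathfrak R(x)=R(x)-\tfrac12R([R(x),x])+\tfrac1{12}R\big([[R(x),x],x]+[R(x),[R(x),x]]\big)+\tfrac14R\big([R([R(x),x]),x]\big),\qquad x\in\mathfrak g,$$ is a Rota–Baxter operator on the group $(\mathfrak g,* )$.
   Context: $\mathfrak g^1=\mathfrak g$, $\mathfrak g^n=[\mathfrak g,\mathfrak g^{n-1}]$. Rota–Baxter operator of weight 1 on a Lie algebra: linear $R$ with $[R(x),R(y)]=R([R(x),y]+[x,R(y)]+[x,y])$. The group $(\mathfrak g,* )$ is $\mathfrak g$ with the Baker–Campbell–Hausdorff product $x*y=\log(\exp(x)\exp(y))$ (computed in the completion of $U(\mathfrak g)$ with respect to the filtration induced by $\mathcal F_n\mathfrak g=\mathfrak g^n$; since $\mathfrak g$ is nilpotent this is a finite Lie polynomial in $x,y$). A Rota–Baxter operator on a group $G$ is a map $\mathfrak R:G\to G$ with $\mathfrak R(g)\mathfrak R(h)=\mathfrak R(g\mathfrak R(g)h\mathfrak R(g)^{-1})$ for all $g,h$. *)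

theory Defs
  imports Complex_Main
begin

definition lie_algebra :: "('a::field \<Rightarrow> 'v::ab_group_add \<Rightarrow> 'v) \<Rightarrow> ('v \<Rightarrow> 'v \<Rightarrow> 'v) \<Rightarrow> bool" where
  "lie_algebra scale br \<longleftrightarrow>
     Vector_Spaces.vector_space scale \<and>
     (\<forall>y. Vector_Spaces.linear scale scale (\<lambda>x. br x y)) \<and>
     (\<forall>x. Vector_Spaces.linear scale scale (br x)) \<and>
     (\<forall>x. br x x = 0) \<and>
     (\<forall>x y z. br x (br y z) + br y (br z x) + br z (br x y) = 0)"

text \<open>Lower central series: g^1 = g, g^(n+1) = [g, g^n] (linear span of brackets).
  Index 0 is also mapped to the whole algebra (unused).\<close>
fun lower_central :: "('a::field \<Rightarrow> 'v::ab_group_add \<Rightarrow> 'v) \<Rightarrow> ('v \<Rightarrow> 'v \<Rightarrow> 'v) \<Rightarrow> nat \<Rightarrow> 'v set" where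
  "lower_central scale br 0 = UNIV"
| "lower_central scale br (Suc 0) = UNIV"
| "lower_central scale br (Suc (Suc n)) =
     module.span scale {br x y | x y. y \<in> lower_central scale br (Suc n)}"

definition rota_baxter_lie_w1 :: "('a::field \<Rightarrow> 'v::ab_group_add \<Rightarrow> 'v) \<Rightarrow> ('v \<Rightarrow> 'v \<Rightarrow> 'v) \<Rightarrow> ('v \<Rightarrow> 'v) \<Rightarrow> bool" where
  "rota_baxter_lie_w1 scale br R \<longleftrightarrow>
     Vector_Spaces.linear scale scale R \<and>
     (\<forall>x y. br (R x) (R y) = R (br (R x) y + br x (R y) + br x y))"

text \<open>BCH product x*y = log(exp x exp y), truncated after degree 3; this is the exact
  BCH product on a Lie algebra with g^4 = 0 (all terms of degree \<ge> 4 lie in g^4).\<close>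
definition bch3 :: "('a::field \<Rightarrow> 'v::ab_group_add \<Rightarrow> 'v) \<Rightarrow> ('v \<Rightarrow> 'v \<Rightarrow> 'v) \<Rightarrow> 'v \<Rightarrow> 'v \<Rightarrow> 'v" where
  "bch3 scale br x y = x + y + scale (1/2) (br x y)
     + scale (1/12) (br x (br x y) + br y (br y x))"

definition rota_baxter_group :: "('v \<Rightarrow> 'v \<Rightarrow> 'v) \<Rightarrow> ('v \<Rightarrow> 'v) \<Rightarrow> ('v \<Rightarrow> 'v) \<Rightarrow> bool" where
  "rota_baxter_group mul ginv RR \<longleftrightarrow>
     (\<forall>g h. mul (RR g) (RR h) = RR (mul (mul (mul g (RR g)) h) (ginv (RR g))))"

end

theory Submission imports Defs begin

locale nrb =
  fixes scale :: "'a::field_char_0 \<Rightarrow> 'v::ab_group_add \<Rightarrow> 'v"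
    and br :: "'v \<Rightarrow> 'v \<Rightarrow> 'v"
    and R :: "'v \<Rightarrow> 'v"
  assumes lie: "lie_algebra scale br"
    and nil4: "lower_central scale br 4 = {0}"
    and rb: "rota_baxter_lie_w1 scale br R"
    and R2: "R ` lower_central scale br 2 \<subseteq> lower_central scale br 2"
    and R3: "R ` lower_central scale br 3 \<subseteq> lower_central scale br 3"
begin

lemma vs: "vector_space scale" using lie unfolding lie_algebra_def by auto

sublocale vector_space scale by (rule vs)

lemma linL: "Vector_Spaces.linear scale scale (\<lambda>x. br x c)" using lie unfolding lie_algebra_def by blast
lemma linR: "Vector_Spaces.linear scale scale (br c)" using lie unfolding lie_algebra_def by blast
lemma linRR: "Vector_Spaces.linear scale scale R" using rb unfolding rota_baxter_lie_w1_def by blast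

lemma brL_add: "br (a + b) c = br a c + br b c"
  using linL[of c] unfolding Vector_Spaces.linear_iff by blast
lemma brL_scale: "br (scale k a) c = scale k (br a c)"
  using linL[of c] unfolding Vector_Spaces.linear_iff by blast
lemma brR_add: "br c (a + b) = br c a + br c b"
  using linR[of c] unfolding Vector_Spaces.linear_iff by blast
lemma brR_scale: "br c (scale k a) = scale k (br c a)"
  using linR[of c] unfolding Vector_Spaces.linear_iff by blast

lemma br_self: "br a a = 0" using lie unfolding lie_algebra_def by auto
lemma jacobi: "br x (br y z) + br y (br z x) + br z (br x y) = 0"
  using lie unfolding lie_algebra_def by auto

lemma R_add: "R (a + b) = R a + R b"
  using linRR unfolding Vector_Spaces.linear_iff by blast
lemma R_scale: "R (scale k a) = scale k (R a)"
  using linRR unfolding Vector_Spaces.linear_iff by blast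
lemma R_rb: "br (R x) (R y) = R (br (R x) y + br x (R y) + br x y)"
  using rb unfolding rota_baxter_lie_w1_def by auto

lemma brL_zero: "br 0 c = 0" using brL_scale[of 0 0 c] by simp
lemma brR_zero: "br c 0 = 0" using brR_scale[of c 0 0] by simp
lemma R_zero: "R 0 = 0" using R_scale[of 0 0] by simp
lemma brL_neg: "br (- a) c = - br a c" using brL_scale[of "-1" a c] by simp
lemma brR_neg: "br c (- a) = - br c a" using brR_scale[of c "-1" a] by simp
lemma R_neg: "R (- a) = - R a" using R_scale[of "-1" a] by simp
lemma brL_diff: "br (a - b) c = br a c - br b c" by (simp only: diff_conv_add_uminus brL_add brL_neg)
lemma brR_diff: "br c (a - b) = br c a - br c b" by (simp only: diff_conv_add_uminus brR_add brR_neg)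
lemma R_diff: "R (a - b) = R a - R b" by (simp only: diff_conv_add_uminus R_add R_neg)

lemma anti: "br a b = - br b a"
proof -
  have "br (a+b) (a+b) = br a a + br b a + (br a b + br b b)" by (simp only: brL_add brR_add)
  then have "0 = br b a + br a b" by (simp only: br_self add_0_left add_0_right)
  then show ?thesis by (metis add.commute eq_neg_iff_add_eq_0)
qed

lemma jacobi_z: "br z (br x y) = br y (br x z) - br x (br y z)"
proof -
  have h: "br y (br z x) = - br y (br x z)" using anti[of z x] brR_neg by simp
  have "br z (br x y) = (br x (br y z) + br y (br z x) + br z (br x y)) - br x (br y z) - br y (br z x)" by simp
  also have "\<dots> = 0 - br x (br y z) - br y (br z x)" by (simp only: jacobi)
  also have "\<dots> = br y (br x z) - br x (br y z)" using h by simp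
  finally show ?thesis .
qed

abbreviation "G2 \<equiv> lower_central scale br 2"
abbreviation "G3 \<equiv> lower_central scale br 3"

lemma G2_def: "G2 = span {br x y | x y. y \<in> UNIV}"
  by (simp add: numeral_eq_Suc)
lemma G3_def: "G3 = span {br x y | x y. y \<in> G2}"
  by (simp add: numeral_eq_Suc)
lemma G4_def: "lower_central scale br 4 = span {br x y | x y. y \<in> G3}"
  by (simp add: numeral_eq_Suc)

lemma G2_br[simp]: "br a b \<in> G2" unfolding G2_def by (rule span_base) auto
lemma G3_brR: "b \<in> G2 \<Longrightarrow> br a b \<in> G3" unfolding G3_def by (rule span_base) auto
lemma G3_brL: "b \<in> G2 \<Longrightarrow> br b a \<in> G3"
proof -
  assume "b \<in> G2"
  then have "br a b \<in> G3" by (rule G3_brR)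
  then have "- br a b \<in> G3" unfolding G3_def by (rule span_neg)
  then show ?thesis by (subst anti) 
qed
lemma van_R: "b \<in> G3 \<Longrightarrow> br a b = 0"
proof -
  assume "b \<in> G3"
  then have "br a b \<in> lower_central scale br 4" unfolding G4_def by (intro span_base) auto
  then show ?thesis using nil4 by auto
qed
lemma van_L: "b \<in> G3 \<Longrightarrow> br b a = 0" by (subst anti) (simp add: van_R)
lemma G3_G2: "b \<in> G3 \<Longrightarrow> b \<in> G2"
proof -
  have "G3 \<subseteq> G2" unfolding G3_def G2_def by (intro span_mono) auto
  then show "b \<in> G3 \<Longrightarrow> b \<in> G2" by auto
qed
lemma van_22: assumes "a \<in> G2" "b \<in> G2" shows "br a b = 0"
proof -
  have "a \<in> span {br x y | x y. y \<in> UNIV}" using assms(1) G2_def by simp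
  then show ?thesis
  proof (induction rule: span_induct_alt)
    case base then show ?case by (simp add: brL_zero)
  next
    case (step c x y)
    then obtain p q where x: "x = br p q" by auto
    have 1: "br p (br q b) = 0" using van_R G3_brR assms(2) by blast
    have 2: "br q (br b p) = 0" using van_R G3_brL assms(2) by blast
    have "br b (br p q) = 0" using jacobi[of p q b] 1 2 by simp
    then have "br (br p q) b = 0" using anti[of "br p q" b] by simp
    then show ?case using step x by (simp add: brL_add brL_scale)
  qed
qed
lemma R_G2: "a \<in> G2 \<Longrightarrow> R a \<in> G2" using R2 by auto
lemma R_G3: "a \<in> G3 \<Longrightarrow> R a \<in> G3" using R3 by auto

lemma sc_eq: "scale 12 a = scale 12 b \<Longrightarrow> a = b"
proof -
  assume "scale 12 a = scale 12 b"
  then have "scale (1/12) (scale 12 a) = scale (1/12) (scale 12 b)" by simp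
  then show ?thesis by simp
qed

lemma sc_B0: "scale (numeral (Num.Bit0 n)) m = scale (numeral n) m + scale (numeral n) m"
  by (simp only: numeral_Bit0 scale_left_distrib)
lemma sc_B1: "scale (numeral (Num.Bit1 n)) m = scale (numeral n) m + scale (numeral n) m + m"
  by (simp only: numeral_Bit1 scale_left_distrib scale_one)
lemma sc_1: "scale (numeral Num.One) m = m" by simp

definition "g2 v \<longleftrightarrow> v \<in> G2"
definition "g3 v \<longleftrightarrow> v \<in> G3"
lemma g2_br: "g2 (br a b)" by (simp add: g2_def)
lemma g3_brR: "g2 b \<Longrightarrow> g3 (br a b)" by (simp add: g2_def g3_def G3_brR)
lemma g3_brL: "g2 b \<Longrightarrow> g3 (br b a)" by (simp add: g2_def g3_def G3_brL)
lemma g_van_R: "g3 b \<Longrightarrow> br a b = 0" by (simp add: g3_def van_R)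
lemma g_van_L: "g3 b \<Longrightarrow> br b a = 0" by (simp add: g3_def van_L)
lemma g_van_22: "g2 a \<Longrightarrow> g2 b \<Longrightarrow> br a b = 0" by (simp add: g2_def van_22)
lemma g2_R: "g2 a \<Longrightarrow> g2 (R a)" by (simp add: g2_def R_G2)
lemma g3_R: "g3 a \<Longrightarrow> g3 (R a)" by (simp add: g3_def R_G3)
lemma g3_g2: "g3 a \<Longrightarrow> g2 a" by (simp add: g2_def g3_def G3_G2)

lemmas lin = brL_add brR_add brL_scale brR_scale brL_neg brR_neg brL_diff brR_diff brL_zero brR_zero
  R_add R_scale R_neg R_diff R_zero scale_right_distrib scale_right_diff_distrib
  br_self g_van_R g_van_L g_van_22 g2_br g3_brR g3_brL g2_R g3_R g3_g2

abbreviation "bch \<equiv> bch3 scale br"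


lemma bch_assoc: "bch (bch x y) z = bch x (bch y z)"
  apply (rule sc_eq)
  apply (simp add: bch3_def lin anti[of y x] anti[of z x] anti[of z y]
     anti[of "br a b" x for a b]  anti[of "br a b" y for a b]  anti[of "br a b" z for a b] 
     jacobi_z[where x=x and y=y and z=z] sc_B0 sc_B1)
  done

lemma bch_zero: "bch u 0 = u" by (simp add: bch3_def lin)
lemma bch_negl: "bch (- u) u = 0" by (simp add: bch3_def lin)
lemma bch_neg: "bch (- v) (- u) = - bch u v"
  apply (rule sc_eq)
  apply (simp add: bch3_def lin anti[of v u] sc_B0 sc_B1)
  done

definition "brr p q = br (R p) q + br p (R q) + br p q"
definition "P a = a + R a"
definition "F a = bch (P a) (- R a)"
definition "th x = x - scale (1/2) (br (R x) x) + scale (1/12) (br (br (R x) x) x + br (R x) (br (R x) x))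
   + scale (1/4) (br (R (br (R x) x)) x)"

lemma R_hom: "R (brr p q) = br (R p) (R q)" unfolding brr_def by (rule R_rb[symmetric])
lemma P_hom: "P (brr p q) = br (P p) (P q)"
proof -
  have "P (brr p q) = brr p q + br (R p) (R q)" unfolding P_def R_hom ..
  then show ?thesis by (simp add: brr_def P_def brL_add brR_add add_ac)
qed
lemma P_add: "P (a + b) = P a + P b" by (simp add: P_def R_add add_ac)
lemma P_scale: "P (scale k a) = scale k (P a)" by (simp add: P_def R_scale scale_right_distrib)

lemma R_bch: "R (bch3 scale brr a b) = bch (R a) (R b)"
  unfolding bch3_def by (simp only: R_add R_scale R_hom)
lemma P_bch: "P (bch3 scale brr a b) = bch (P a) (P b)"
  unfolding bch3_def by (simp only: P_add P_scale P_hom)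

lemma F_th: "F (th x) = x"
  apply (rule sc_eq)
  apply (simp add: F_def P_def th_def bch3_def lin sc_B0 sc_B1 anti[of x "R x"] anti[of "br (R x) x" x]
     anti[of "br (R x) x" "R x"] anti[of x "R (br (R x) x)"] anti[of "R (br (R x) x)" "R x"])
  done

lemma th_F: "th (F x) = x"
  apply (rule sc_eq)
  apply (simp add: F_def P_def th_def bch3_def lin sc_B0 sc_B1 anti[of x "R x"] anti[of "br (R x) x" x]
     anti[of "br (R x) x" "R x"] anti[of x "R (br (R x) x)"] anti[of "R (br (R x) x)" "R x"])
  done

lemma main: "rota_baxter_group bch uminus
           (\<lambda>x. R x - scale (1/2) (R (br (R x) x))
                + scale (1/12) (R (br (br (R x) x) x + br (R x) (br (R x) x)))
                + scale (1/4) (R (br (R (br (R x) x)) x)))" (is "rota_baxter_group _ _ ?Phi")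
proof -
  have Phi: "?Phi x = R (th x)" for x by (simp add: th_def R_add R_diff R_scale)
  show ?thesis unfolding rota_baxter_group_def
  proof (intro allI)
    fix g h
    define a where "a = th g"
    define b where "b = th h"
    define c where "c = bch3 scale brr a b"
    have g: "g = F a" unfolding a_def by (simp only: F_th)
    have h: "h = F b" unfolding b_def by (simp only: F_th)
    have Pa: "?Phi g = R a" unfolding a_def Phi ..
    have Pb: "?Phi h = R b" unfolding b_def Phi ..
    have 1: "bch g (R a) = P a" unfolding g F_def bch_assoc bch_negl bch_zero ..
    have 2: "bch (P a) h = bch (bch (P a) (P b)) (- R b)" unfolding h F_def bch_assoc ..
    have 3: "bch (bch (bch g (R a)) h) (- R a) = F c"
      unfolding 1 2 bch_assoc bch_neg F_def c_def P_bch R_bch ..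
    have X: "?Phi (bch (bch (bch g (R a)) h) (- R a)) = bch (R a) (R b)"
      unfolding 3 Phi th_F c_def R_bch ..
    show "bch (?Phi g) (?Phi h) = ?Phi (bch (bch (bch g (?Phi g)) h) (- ?Phi g))"
      by (simp only: Pa Pb X)
  qed
qed

end

theorem corollary4p24:
  fixes scale :: "'a::field_char_0 \<Rightarrow> 'v::ab_group_add \<Rightarrow> 'v"
    and br :: "'v \<Rightarrow> 'v \<Rightarrow> 'v"
    and R :: "'v \<Rightarrow> 'v"
  assumes "lie_algebra scale br"
    and "lower_central scale br 4 = {0}"
    and "rota_baxter_lie_w1 scale br R"
    and "R ` lower_central scale br 2 \<subseteq> lower_central scale br 2"
    and "R ` lower_central scale br 3 \<subseteq> lower_central scale br 3"
  shows "rota_baxter_group (bch3 scale br) uminus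
           (\<lambda>x. R x - scale (1/2) (R (br (R x) x))
                + scale (1/12) (R (br (br (R x) x) x + br (R x) (br (R x) x)))
                + scale (1/4) (R (br (R (br (R x) x)) x)))"
proof -
  interpret nrb scale br R using assms by (rule nrb.intro)
  show ?thesis by (rule main)
qed

end
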